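(* Let $\Sigma$ be a $\delta$-set and let $s=\max\Sigma$. Then $|\Sigma|\ge\lceil (s+1)/2\rceil$.
   Context: All graphs are finite and simple; $d(u,v)$ denotes the usual graph distance (infinite between different components). For a set $J$ of nonnegative integers, a distance $J$-labeling of $G$ is a function $f:V(G)\to J$ with $f(V(G))=J$ such that whenever two distinct vertices $u,v$ satisfy $f(u)=f(v)=k$, we have $d(u,v)=k$. It is proper if every $k\in J\setminus\{0\}$ is the label of at least two vertices. A finite nonempty set $\Sigma$ of nonnegative integers is a $\delta$-set if there exists a graph admitting a proper distance $\Sigma$-labeling. *)

theory Defs
  imports Complex_Main "HOL-Library.Extended_Nat"
begin

definition simple_graph :: "'a set \<Rightarrow> ('a \<Rightarrow> 'a \<Rightarrow> bool) \<Rightarrow> bool" where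
  "simple_graph V E \<longleftrightarrow> finite V \<and> (\<forall>u v. E u v \<longrightarrow> u \<in> V \<and> v \<in> V)
     \<and> (\<forall>u v. E u v \<longrightarrow> E v u) \<and> (\<forall>u. \<not> E u u)"

fun walk :: "('a \<Rightarrow> 'a \<Rightarrow> bool) \<Rightarrow> nat \<Rightarrow> 'a \<Rightarrow> 'a \<Rightarrow> bool" where
  "walk E 0 u v = (u = v)"
| "walk E (Suc n) u v = (\<exists>w. E u w \<and> walk E n w v)"

definition gdist :: "('a \<Rightarrow> 'a \<Rightarrow> bool) \<Rightarrow> 'a \<Rightarrow> 'a \<Rightarrow> enat" where
  "gdist E u v = (if \<exists>n. walk E n u v then enat (LEAST n. walk E n u v) else \<infinity>)"

definition distance_labeling ::
  "'a set \<Rightarrow> ('a \<Rightarrow> 'a \<Rightarrow> bool) \<Rightarrow> nat set \<Rightarrow> ('a \<Rightarrow> nat) \<Rightarrow> bool" where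
  "distance_labeling V E J f \<longleftrightarrow> f ` V = J \<and>
     (\<forall>u\<in>V. \<forall>v\<in>V. \<forall>k. u \<noteq> v \<and> f u = k \<and> f v = k \<longrightarrow> gdist E u v = enat k)"

definition proper_distance_labeling ::
  "'a set \<Rightarrow> ('a \<Rightarrow> 'a \<Rightarrow> bool) \<Rightarrow> nat set \<Rightarrow> ('a \<Rightarrow> nat) \<Rightarrow> bool" where
  "proper_distance_labeling V E J f \<longleftrightarrow> distance_labeling V E J f \<and>
     (\<forall>k\<in>J - {0}. \<exists>u\<in>V. \<exists>v\<in>V. u \<noteq> v \<and> f u = k \<and> f v = k)"

text \<open>Vertices are taken from nat: every finite graph is isomorphic to one on nat.\<close>
definition delta_set :: "nat set \<Rightarrow> bool" where
  "delta_set \<Sigma> \<longleftrightarrow> finite \<Sigma> \<and> \<Sigma> \<noteq> {} \<and>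
     (\<exists>(V::nat set) E f. simple_graph V E \<and> proper_distance_labeling V E \<Sigma> f)"

end

theory Submission
  imports Defs
begin

lemma walk_iff:
  "walk E n u v \<longleftrightarrow> (\<exists>p. p 0 = u \<and> p n = v \<and> (\<forall>i<n. E (p i) (p (Suc i))))"
proof (induction n arbitrary: u)
  case 0
  then show ?case by auto
next
  case (Suc n)
  show ?case
  proof
    assume "walk E (Suc n) u v"
    then obtain w where w: "E u w" "walk E n w v" by auto
    then obtain p where p: "p 0 = w" "p n = v" "\<forall>i<n. E (p i) (p (Suc i))"
      using Suc.IH by blast
    define q where "q = (\<lambda>i. if i = 0 then u else p (i - 1))"
    have "q 0 = u \<and> q (Suc n) = v \<and> (\<forall>i<Suc n. E (q i) (q (Suc i)))"
      using p w(1) unfolding q_def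
      by (auto, metis Suc_pred less_Suc_eq_0_disj not_less_eq)
    then show "\<exists>p. p 0 = u \<and> p (Suc n) = v \<and> (\<forall>i<Suc n. E (p i) (p (Suc i)))" by blast
  next
    assume "\<exists>p. p 0 = u \<and> p (Suc n) = v \<and> (\<forall>i<Suc n. E (p i) (p (Suc i)))"
    then obtain p where p: "p 0 = u" "p (Suc n) = v" "\<forall>i<Suc n. E (p i) (p (Suc i))" by blast
    have "walk E n (p 1) v"
      using Suc.IH[of "p 1"] p by (intro iffD2[OF Suc.IH] exI[of _ "\<lambda>i. p (Suc i)"]) auto
    moreover have "E u (p 1)" using p by auto
    ultimately show "walk E (Suc n) u v" by auto
  qed
qed

lemma walk_trans: "walk E a x y \<Longrightarrow> walk E b y z \<Longrightarrow> walk E (a + b) x z"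
  by (induction a arbitrary: x) auto

lemma walk_sub:
  assumes "\<forall>i<n. E (p i) (p (Suc i))" "i \<le> j" "j \<le> n"
  shows "walk E (j - i) (p i) (p j)"
proof -
  show ?thesis unfolding walk_iff
    by (rule exI[of _ "\<lambda>t. p (i + t)"]) (use assms in auto)
qed

lemma gdist_walk: "gdist E x y = enat m \<Longrightarrow> walk E m x y"
  unfolding gdist_def by (auto split: if_splits intro: LeastI)

lemma gdist_le: "walk E n x y \<Longrightarrow> \<exists>m\<le>n. gdist E x y = enat m"
  unfolding gdist_def by (auto intro: Least_le)

lemma gdist_least: "gdist E x y = enat m \<Longrightarrow> walk E n x y \<Longrightarrow> m \<le> n"
  unfolding gdist_def by (auto split: if_splits intro: Least_le)

theorem mainTheorem12:
  assumes "delta_set \<Sigma>"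
  shows "int (card \<Sigma>) \<ge> \<lceil>(real (Max \<Sigma>) + 1) / 2\<rceil>"
proof -
  obtain V :: "nat set" and E f where G: "simple_graph V E" and L: "proper_distance_labeling V E \<Sigma> f"
    and fin: "finite \<Sigma>" and ne: "\<Sigma> \<noteq> {}"
    using assms unfolding delta_set_def by blast
  define s where "s = Max \<Sigma>"
  have sS: "s \<in> \<Sigma>" using fin ne s_def by simp
  have key: "s + 1 \<le> 2 * card \<Sigma>"
  proof (cases "s = 0")
    case True
    have "card \<Sigma> \<ge> 1" using fin ne by (simp add: Suc_leI card_gt_0_iff)
    then show ?thesis using True by simp
  next
    case False
    then obtain u v where uv: "u \<in> V" "v \<in> V" "u \<noteq> v" "f u = s" "f v = s"
      using L sS unfolding proper_distance_labeling_def by blast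
    have dl: "\<forall>u\<in>V. \<forall>v\<in>V. \<forall>k. u \<noteq> v \<and> f u = k \<and> f v = k \<longrightarrow> gdist E u v = enat k"
      and img: "f ` V = \<Sigma>"
      using L unfolding proper_distance_labeling_def distance_labeling_def by auto
    have gs: "gdist E u v = enat s" using dl uv by blast
    then have "walk E s u v" by (rule gdist_walk)
    then obtain p where p: "p 0 = u" "p s = v" "\<forall>i<s. E (p i) (p (Suc i))"
      unfolding walk_iff by blast
    have pV: "p i \<in> V" if "i \<le> s" for i
    proof (cases "i < s")
      case True then show ?thesis using p G unfolding simple_graph_def by blast
    next
      case False then show ?thesis using that p uv by auto
    qed
    have geo: "gdist E (p i) (p j) = enat (j - i)" if ij: "i \<le> j" "j \<le> s" for i j
    proof -
      obtain m where m: "m \<le> j - i" "gdist E (p i) (p j) = enat m"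
        using gdist_le[OF walk_sub[of s E p i j, OF p(3) ij]] by blast
      have w1: "walk E (i - 0) u (p i)" using walk_sub[of s E p 0 i, OF p(3)] ij p(1) by auto
      have w3: "walk E (s - j) (p j) v" using walk_sub[of s E p j s, OF p(3)] ij p(2) by auto
      have "walk E (i + m + (s - j)) u v"
        using walk_trans[OF walk_trans[OF w1[simplified] gdist_walk[OF m(2)]] w3] .
      then have "s \<le> i + m + (s - j)" using gdist_least[OF gs] by blast
      then have "m = j - i" using m ij by linarith
      then show ?thesis using m by simp
    qed
    have g0: "gdist E x x = enat 0" for x
      using gdist_le[of E 0 x x] by auto
    define F where "F k = {i. i \<le> s \<and> f (p i) = k}" for k
    have Fcard: "card (F k) \<le> 2" for k
    proof (cases "F k = {}")
      case True then show ?thesis by simp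
    next
      case False
      have finF: "finite (F k)" unfolding F_def by auto
      define a where "a = Min (F k)"
      have aF: "a \<in> F k" using finF False a_def by simp
      have "F k \<subseteq> {a, a + k}"
      proof
        fix i assume iF: "i \<in> F k"
        have ai: "a \<le> i" using finF iF a_def by simp
        show "i \<in> {a, a + k}"
        proof (cases "i = a")
          case True then show ?thesis by simp
        next
          case ne2: False
          have "i \<le> s" "a \<le> s" "f (p i) = k" "f (p a) = k" using iF aF unfolding F_def by auto
          have gai: "gdist E (p a) (p i) = enat (i - a)" using geo ai \<open>i \<le> s\<close> by blast
          have "p a \<noteq> p i"
          proof
            assume "p a = p i"
            then have "gdist E (p a) (p i) = enat 0" using g0 by simp
            then show False using gai ai ne2 by simp
          qed
          then have "gdist E (p a) (p i) = enat k"
            using dl pV \<open>i \<le> s\<close> \<open>a \<le> s\<close> \<open>f (p i) = k\<close> \<open>f (p a) = k\<close> by blast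
          then show ?thesis using gai ai by auto
        qed
      qed
      then have "card (F k) \<le> card {a, a + k}" by (rule card_mono[rotated]) simp
      also have "\<dots> \<le> 2" by (simp add: card_insert_le_m1)
      finally show ?thesis .
    qed
    have "{0..s} \<subseteq> (\<Union>k\<in>\<Sigma>. F k)"
    proof
      fix i assume "i \<in> {0..s}"
      then have "i \<le> s" by simp
      then have "f (p i) \<in> \<Sigma>" using pV img by blast
      then show "i \<in> (\<Union>k\<in>\<Sigma>. F k)" unfolding F_def using \<open>i \<le> s\<close> by blast
    qed
    then have "card {0..s} \<le> card (\<Union>k\<in>\<Sigma>. F k)"
      by (rule card_mono[rotated]) (auto simp: F_def fin)
    also have "\<dots> \<le> (\<Sum>k\<in>\<Sigma>. card (F k))" by (rule card_UN_le[OF fin])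
    also have "\<dots> \<le> (\<Sum>k\<in>\<Sigma>. 2)" by (rule sum_mono) (rule Fcard)
    finally show ?thesis by simp
  qed
  have "real (s + 1) \<le> real (2 * card \<Sigma>)" using key by (simp only: of_nat_le_iff)
  then have "(real s + 1) / 2 \<le> real (card \<Sigma>)" by simp
  then have "\<lceil>(real s + 1) / 2\<rceil> \<le> \<lceil>real (card \<Sigma>)\<rceil>" by (rule ceiling_mono)
  then show ?thesis using s_def by simp
qed

end
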